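(* Consider classical propositional logic over a set $V$ of propositional variables, and suppose that for every disjoint cover $X',X''$ of $V$, the relation $\preceq$ on $(\Pi V\times\Pi V)\cup(\Pi X'\times\Pi X')\cup(\Pi X''\times\Pi X'')$ is a smooth (generalized) Hamming relation. Define $\beta\mathrel{|\!\sim}\gamma$ iff $\mu(M(\beta))\subseteq M(\gamma)$. Then for all formulas $\phi,\psi$ with $\phi\mathrel{|\!\sim}\psi$ there is a formula $\alpha$ with $var(\alpha)\subseteq var(\phi)\cap var(\psi)$ such that $\phi\vdash\alpha$ and $\alpha\mathrel{|\!\sim}\psi$.
   Context: For $Y\subseteq V$, $\Pi Y$ is the set of assignments $Y\to\{\mathrm{TRUE},\mathrm{FALSE}\}$; $M(\phi)\subseteq\Pi V$ is the set of models of $\phi$; $var(\phi)$ is the set of variables occurring in $\phi$. For $\sigma\in\Pi V$ write $\sigma=\sigma'\circ\sigma''$ with $\sigma'=\sigma\upharpoonright X'$, $\sigma''=\sigma\upharpoonright X''$. $\preceq$ is a (generalized) Hamming relation for the cover $X',X''$ iff $\preceq$ is reflexive and for all $\sigma,\tau\in\Pi V$: $\sigma\preceq\tau\iff(\sigma'\preceq\tau'$ and $\sigma''\preceq\tau'')$. $x\prec y$ means $x\preceq y$ and $x\neq y$. For a set $A$ of (partial) models, $\mu(A):=\{x\in A:\neg\exists x'\in A.\,x'\prec x\}$; $\preceq$ is smooth iff for every such $A$ and $x\in A-\mu(A)$ there is $x'\in\mu(A)$ with $x'\prec x$. *)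

theory Defs
  imports Main
begin

text \<open>Propositional formulas over variables of type 'v (the whole type 'v plays the role of V).\<close>
datatype 'v form =
    Var 'v
  | Bot
  | Neg "'v form"
  | Conj "'v form" "'v form"
  | Disj "'v form" "'v form"
  | Imp "'v form" "'v form"

primrec vars :: "'v form \<Rightarrow> 'v set" where
  "vars (Var v) = {v}"
| "vars Bot = {}"
| "vars (Neg a) = vars a"
| "vars (Conj a b) = vars a \<union> vars b"
| "vars (Disj a b) = vars a \<union> vars b"
| "vars (Imp a b) = vars a \<union> vars b"

definition Pi_asg :: "'v set \<Rightarrow> ('v \<rightharpoonup> bool) set" where
  "Pi_asg X = {s. dom s = X}"

primrec eval :: "('v \<rightharpoonup> bool) \<Rightarrow> 'v form \<Rightarrow> bool" where
  "eval s (Var v) = (s v = Some True)"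
| "eval s Bot = False"
| "eval s (Neg a) = (\<not> eval s a)"
| "eval s (Conj a b) = (eval s a \<and> eval s b)"
| "eval s (Disj a b) = (eval s a \<or> eval s b)"
| "eval s (Imp a b) = (eval s a \<longrightarrow> eval s b)"

definition Mod :: "'v form \<Rightarrow> ('v \<rightharpoonup> bool) set" where
  "Mod a = {s \<in> Pi_asg UNIV. eval s a}"

definition entails :: "'v form \<Rightarrow> 'v form \<Rightarrow> bool" where
  "entails a b \<longleftrightarrow> Mod a \<subseteq> Mod b"

definition strict :: "('a \<Rightarrow> 'a \<Rightarrow> bool) \<Rightarrow> 'a \<Rightarrow> 'a \<Rightarrow> bool" where
  "strict R x y \<longleftrightarrow> R x y \<and> x \<noteq> y"

definition mu :: "('a \<Rightarrow> 'a \<Rightarrow> bool) \<Rightarrow> 'a set \<Rightarrow> 'a set" where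
  "mu R A = {x \<in> A. \<not> (\<exists>x'\<in>A. strict R x' x)}"

definition hamming :: "(('v \<rightharpoonup> bool) \<Rightarrow> ('v \<rightharpoonup> bool) \<Rightarrow> bool) \<Rightarrow> 'v set \<Rightarrow> 'v set \<Rightarrow> bool" where
  "hamming R X1 X2 \<longleftrightarrow>
     (\<forall>s \<in> Pi_asg UNIV \<union> Pi_asg X1 \<union> Pi_asg X2. R s s) \<and>
     (\<forall>s \<in> Pi_asg UNIV. \<forall>t \<in> Pi_asg UNIV.
        R s t \<longleftrightarrow> (R (s |` X1) (t |` X1) \<and> R (s |` X2) (t |` X2)))"

definition smooth_on :: "(('v \<rightharpoonup> bool) \<Rightarrow> ('v \<rightharpoonup> bool) \<Rightarrow> bool) \<Rightarrow> 'v set \<Rightarrow> bool" where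
  "smooth_on R X \<longleftrightarrow>
     (\<forall>A \<subseteq> Pi_asg X. \<forall>x \<in> A - mu R A. \<exists>x' \<in> mu R A. strict R x' x)"

definition nm_entails :: "(('v \<rightharpoonup> bool) \<Rightarrow> ('v \<rightharpoonup> bool) \<Rightarrow> bool) \<Rightarrow> 'v form \<Rightarrow> 'v form \<Rightarrow> bool" where
  "nm_entails R b c \<longleftrightarrow> mu R (Mod b) \<subseteq> Mod c"

end

theory Submission
  imports Defs
begin

lemma eval_agree: "(\<forall>v\<in>vars a. s v = t v) \<Longrightarrow> eval s a = eval t a"
  by (induction a) auto

lemma finite_vars: "finite (vars a)"
  by (induction a) auto

definition dep :: "'v set \<Rightarrow> ('v \<rightharpoonup> bool) set \<Rightarrow> bool" where
  "dep I S \<longleftrightarrow> (\<forall>s t. s \<in> Pi_asg UNIV \<longrightarrow> t \<in> Pi_asg UNIV \<longrightarrow> (\<forall>v\<in>I. s v = t v) \<longrightarrow> (s\<in>S \<longleftrightarrow> t\<in>S))"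

lemma upd_total: "s \<in> Pi_asg UNIV \<Longrightarrow> s(x:=Some b) \<in> Pi_asg UNIV"
  by (auto simp: Pi_asg_def)

lemma total_cases: "s \<in> Pi_asg UNIV \<Longrightarrow> s x = Some True \<or> s x = Some False"
  unfolding Pi_asg_def by (cases "s x") auto

lemma express:
  assumes "finite I"
  shows "dep I S \<Longrightarrow> \<exists>\<alpha>. vars \<alpha> \<subseteq> I \<and> (\<forall>s\<in>Pi_asg UNIV. eval s \<alpha> \<longleftrightarrow> s \<in> S)"
  using assms
proof (induction I arbitrary: S rule: finite_induct)
  case empty
  show ?case
  proof (cases "S \<inter> Pi_asg UNIV = {}")
    case True
    have "\<forall>s\<in>Pi_asg UNIV. eval s Bot \<longleftrightarrow> s \<in> S" using True by auto
    then show ?thesis by (intro exI[of _ Bot]) simp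
  next
    case False
    then obtain s0 where s0: "s0 \<in> S" "s0 \<in> Pi_asg UNIV" by auto
    have "\<forall>s\<in>Pi_asg UNIV. s \<in> S"
    proof
      fix s :: "'a \<Rightarrow> bool option" assume "s \<in> Pi_asg UNIV"
      then show "s \<in> S" using empty.prems[unfolded dep_def, rule_format, of s s0] s0 by simp
    qed
    then show ?thesis by (intro exI[of _ "Neg Bot"]) simp
  qed
next
  case (insert x I)
  define ST where "ST = {s. s(x:=Some True) \<in> S}"
  define SF where "SF = {s. s(x:=Some False) \<in> S}"
  have dT: "dep I ST" unfolding dep_def ST_def
  proof (intro allI impI)
    fix s t :: "'a \<Rightarrow> bool option"
    assume a: "s \<in> Pi_asg UNIV" "t \<in> Pi_asg UNIV" "\<forall>v\<in>I. s v = t v"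
    have ag: "\<forall>v\<in>insert x I. (s(x:=Some True)) v = (t(x:=Some True)) v" using a by auto
    have p1: "s(x:=Some True) \<in> Pi_asg UNIV" "t(x:=Some True) \<in> Pi_asg UNIV" using upd_total[OF a(1)] upd_total[OF a(2)] by blast+
    have "(s(x:=Some True) \<in> S) = (t(x:=Some True) \<in> S)"
      using insert.prems p1 ag unfolding dep_def by blast
    then show "(s \<in> {s. s(x := Some True) \<in> S}) = (t \<in> {s. s(x := Some True) \<in> S})"
      by simp
  qed
  have dF: "dep I SF" unfolding dep_def SF_def
  proof (intro allI impI)
    fix s t :: "'a \<Rightarrow> bool option"
    assume a: "s \<in> Pi_asg UNIV" "t \<in> Pi_asg UNIV" "\<forall>v\<in>I. s v = t v"
    have ag: "\<forall>v\<in>insert x I. (s(x:=Some False)) v = (t(x:=Some False)) v" using a by auto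
    have p1: "s(x:=Some False) \<in> Pi_asg UNIV" "t(x:=Some False) \<in> Pi_asg UNIV" using upd_total[OF a(1)] upd_total[OF a(2)] by blast+
    have "(s(x:=Some False) \<in> S) = (t(x:=Some False) \<in> S)"
      using insert.prems p1 ag unfolding dep_def by blast
    then show "(s \<in> {s. s(x := Some False) \<in> S}) = (t \<in> {s. s(x := Some False) \<in> S})"
      by simp
  qed
  obtain aT where aT: "vars aT \<subseteq> I" "\<forall>s\<in>Pi_asg UNIV. eval s aT \<longleftrightarrow> s \<in> ST"
    using insert.IH[OF dT] by blast
  obtain aF where aF: "vars aF \<subseteq> I" "\<forall>s\<in>Pi_asg UNIV. eval s aF \<longleftrightarrow> s \<in> SF"
    using insert.IH[OF dF] by blast
  show ?case
  proof (intro exI[of _ "Disj (Conj (Var x) aT) (Conj (Neg (Var x)) aF)"] conjI ballI)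
    show "vars (Disj (Conj (Var x) aT) (Conj (Neg (Var x)) aF)) \<subseteq> insert x I"
      using aT aF by auto
  next
    fix s :: "'a \<Rightarrow> bool option" assume s: "s \<in> Pi_asg UNIV"
    show "eval s (Disj (Conj (Var x) aT) (Conj (Neg (Var x)) aF)) = (s \<in> S)"
    proof (cases "s x = Some True")
      case True
      then have "s(x:=Some True) = s" by auto
      have "eval s aT = (s \<in> S)" using aT(2) s \<open>s(x:=Some True) = s\<close> unfolding ST_def by simp
      then show ?thesis using True by simp
    next
      case False
      then have "s x = Some False" using total_cases[OF s] by auto
      then have "s(x:=Some False) = s" by auto
      have "eval s aF = (s \<in> S)" using aF(2) s \<open>s(x:=Some False) = s\<close> unfolding SF_def by simp
      then show ?thesis using \<open>s x = Some False\<close> by simp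
    qed
  qed
qed

lemma dom_restrict_total: "s \<in> Pi_asg UNIV \<Longrightarrow> s |` X \<in> Pi_asg X"
  by (auto simp: Pi_asg_def)

theorem corollary4p11:
  fixes R :: "('v \<rightharpoonup> bool) \<Rightarrow> ('v \<rightharpoonup> bool) \<Rightarrow> bool"
  assumes "\<forall>X1 X2. X1 \<union> X2 = UNIV \<and> X1 \<inter> X2 = {} \<longrightarrow>
             hamming R X1 X2 \<and> smooth_on R UNIV \<and> smooth_on R X1 \<and> smooth_on R X2"
  shows "\<forall>\<phi> \<psi>. nm_entails R \<phi> \<psi> \<longrightarrow>
           (\<exists>\<alpha>. vars \<alpha> \<subseteq> vars \<phi> \<inter> vars \<psi> \<and> entails \<phi> \<alpha> \<and> nm_entails R \<alpha> \<psi>)"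
proof (intro allI impI)
  fix \<phi> \<psi> :: "'v form"
  assume nm: "nm_entails R \<phi> \<psi>"
  define I where "I = vars \<phi> \<inter> vars \<psi>"
  define S where "S = {s \<in> Pi_asg UNIV. \<exists>t \<in> Mod \<phi>. \<forall>v\<in>I. s v = t v}"
  have "dep I S" unfolding dep_def S_def by auto
  moreover have "finite I" unfolding I_def using finite_vars by blast
  ultimately obtain \<alpha> where al: "vars \<alpha> \<subseteq> I" "\<forall>s\<in>Pi_asg UNIV. eval s \<alpha> \<longleftrightarrow> s \<in> S"
    using express by blast
  have ModA: "Mod \<alpha> = S" using al(2) unfolding Mod_def S_def by auto
  define X1 where "X1 = vars \<psi>"
  define X2 where "X2 = - vars \<psi>"
  have ham: "hamming R X1 X2" and sm: "smooth_on R UNIV"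
    using assms[rule_format, of X1 X2] unfolding X1_def X2_def by auto
  have ent: "entails \<phi> \<alpha>" unfolding entails_def ModA
  proof
    fix x assume xM: "x \<in> Mod \<phi>"
    then have "x \<in> Pi_asg UNIV" unfolding Mod_def by simp
    then show "x \<in> S" using xM unfolding S_def by blast
  qed
  have "nm_entails R \<alpha> \<psi>" unfolding nm_entails_def
  proof
    fix s assume smu: "s \<in> mu R (Mod \<alpha>)"
    then have sA: "s \<in> S" and sP: "s \<in> Pi_asg UNIV"
      and nostrict: "\<not> (\<exists>x'\<in>Mod \<alpha>. strict R x' s)"
      unfolding mu_def ModA S_def by auto
    obtain t where t: "t \<in> Mod \<phi>" "\<forall>v\<in>I. s v = t v" using sA unfolding S_def by auto
    define u where "u = (\<lambda>v. if v \<in> vars \<psi> then s v else t v)"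
    have tP: "t \<in> Pi_asg UNIV" using t unfolding Mod_def by auto
    have uP: "u \<in> Pi_asg UNIV" using sP tP unfolding Pi_asg_def u_def dom_def by (auto simp: set_eq_iff)
    have "eval u \<phi> = eval t \<phi>" by (rule eval_agree) (use t(2) in \<open>auto simp: u_def I_def\<close>)
    then have uM: "u \<in> Mod \<phi>" using t uP unfolding Mod_def by auto
    have upsi: "eval u \<psi> = eval s \<psi>" by (rule eval_agree) (auto simp: u_def)
    show "s \<in> Mod \<psi>"
    proof (cases "u \<in> mu R (Mod \<phi>)")
      case True
      then show ?thesis using nm upsi sP unfolding nm_entails_def Mod_def by auto
    next
      case False
      have "Mod \<phi> \<subseteq> Pi_asg UNIV" unfolding Mod_def by auto
      then obtain u' where u': "u' \<in> mu R (Mod \<phi>)" "strict R u' u"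
        using sm uM False unfolding smooth_on_def by blast
      have u'M: "u' \<in> Mod \<phi>" using u' unfolding mu_def by auto
      then have u'P: "u' \<in> Pi_asg UNIV" unfolding Mod_def by auto
      have u'psi: "eval u' \<psi>" using u' nm unfolding nm_entails_def Mod_def by auto
      have Ru: "R (u' |` X1) (u |` X1)" using ham u' u'P uP unfolding hamming_def strict_def by blast
      define s' where "s' = (\<lambda>v. if v \<in> vars \<psi> then u' v else s v)"
      have s'P: "s' \<in> Pi_asg UNIV" using sP u'P unfolding Pi_asg_def s'_def dom_def by (auto simp: set_eq_iff)
      have e1: "s' |` X1 = u' |` X1" by (rule ext) (simp add: s'_def X1_def restrict_map_def)
      have e2: "s |` X1 = u |` X1" by (rule ext) (simp add: u_def X1_def restrict_map_def)
      have e3: "s' |` X2 = s |` X2" by (rule ext) (simp add: s'_def X2_def restrict_map_def)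
      have refl2: "R (s |` X2) (s |` X2)" using ham dom_restrict_total[OF sP, of X2]
        unfolding hamming_def by blast
      have "R s' s \<longleftrightarrow> R (s' |` X1) (s |` X1) \<and> R (s' |` X2) (s |` X2)"
        using ham s'P sP unfolding hamming_def by blast
      then have Rs: "R s' s" using Ru refl2 e1 e2 e3 by simp
      have "eval s' \<alpha> = eval u' \<alpha>" by (rule eval_agree) (use al(1) in \<open>auto simp: s'_def I_def\<close>)
      moreover have "eval u' \<alpha>" using al(2) u'P u'M unfolding S_def by auto
      ultimately have s'A: "s' \<in> Mod \<alpha>" using s'P unfolding Mod_def by auto
      have "s' = s" using nostrict s'A Rs unfolding strict_def by auto
      moreover have "eval s' \<psi>" using u'psi by (subst eval_agree[of _ _ u']) (auto simp: s'_def)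
      ultimately show ?thesis using sP unfolding Mod_def by auto
    qed
  qed
  then show "\<exists>\<alpha>. vars \<alpha> \<subseteq> vars \<phi> \<inter> vars \<psi> \<and> entails \<phi> \<alpha> \<and> nm_entails R \<alpha> \<psi>"
    using al(1) ent unfolding I_def by blast
qed

end
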